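(* Let $n$ be a positive integer with $\lambda^{3n/2}>2(1+\sqrt2)C_1$. Then $k_n>0$ and $$\frac{C_2}{2}\lambda^{n/2}<k_n^{1/2}<\frac{3C_2}{2}\lambda^{n/2}.$$
   Context: Standing setup: $p,q\in\mathbb{Z}$ are such that $x^3-px-q$ is irreducible over $\mathbb{Q}$ with exactly one real root $\theta$ (one has $3\theta^2-4p>0$ and $3\theta^2-p>0$). $K=\mathbb{Q}(\theta)\subset\mathbb{R}$, $\mathcal{O}_K$ its ring of integers. $d$ is a positive integer with $\mathcal{O}_K\subseteq\frac1d\mathbb{Z}[\theta]$. $\lambda\in\mathcal{O}_K$ is a unit with $\lambda>1$. For $n\ge1$ the rationals $a_n,b_n,c_n$ are defined by $a_n+b_n\theta+c_n\theta^2=\lambda^n$, and $X_n=a_n+pc_n-b_n\theta$, $Y_n=a_n+pc_n-c_n\theta^2$, $Z_n=b_n\theta-c_n\theta^2$, $k_n=dc_n$. Constants: $C_1=\max\{\sqrt2,\ \frac{\sqrt2|\theta|}{\sqrt{3\theta^2-4p}}\}$, $C_2=\frac{\sqrt d}{\sqrt{3\theta^2-p}}$. *)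

theory Defs
  imports "HOL-Analysis.Analysis" "HOL-Computational_Algebra.Computational_Algebra"
begin

definition cubic_field :: "real \<Rightarrow> real set" where
  "cubic_field \<theta> = {of_rat r0 + of_rat r1 * \<theta> + of_rat r2 * \<theta>^2 | r0 r1 r2. True}"

definition ring_of_integers :: "real \<Rightarrow> real set" where
  "ring_of_integers \<theta> = {x \<in> cubic_field \<theta>. algebraic_int x}"

definition scaled_order :: "nat \<Rightarrow> real \<Rightarrow> real set" where
  "scaled_order d \<theta> = {(of_int u + of_int v * \<theta> + of_int w * \<theta>^2) / real d | u v w. True}"

definition C1 :: "int \<Rightarrow> real \<Rightarrow> real" where
  "C1 p \<theta> = max (sqrt 2) (sqrt 2 * \<bar>\<theta>\<bar> / sqrt (3 * \<theta>^2 - 4 * of_int p))"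

definition C2 :: "int \<Rightarrow> nat \<Rightarrow> real \<Rightarrow> real" where
  "C2 p d \<theta> = sqrt (real d) / sqrt (3 * \<theta>^2 - of_int p)"

end

theory Submission
  imports Defs
begin


lemma unit_deg: "is_unit (p :: rat poly) \<Longrightarrow> degree p = 0"
  by (simp add: is_unit_poly_iff) (metis degree_pCons_0)

lemma no_rat_root:
  assumes irr: "irreducible ([:- of_int q, - of_int p, 0, 1:] :: rat poly)"
  shows "(t::rat)^3 - of_int p * t - of_int q \<noteq> 0"
proof
  assume h: "t^3 - of_int p * t - of_int q = 0"
  have "[:- of_int q, - of_int p, 0, 1:] = [:-t,1:] * [:t^2 - of_int p, t, 1:]"
    using h by (simp add: algebra_simps power2_eq_square power3_eq_cube eq_neg_iff_add_eq_0)
  from irreducibleD[OF irr this] show False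
    by (auto dest!: unit_deg)
qed

lemma no_quad_factor:
  assumes irr: "irreducible ([:- of_int q, - of_int p, 0, 1:] :: rat poly)"
  shows "\<not> (b^2 - a = (of_int p::rat) \<and> b * a = of_int q)"
proof
  assume h: "b^2 - a = (of_int p::rat) \<and> b * a = of_int q"
  have "[:- of_int q, - of_int p, 0, 1:] = [:a,b,1:] * [:-b,1:]"
    using h by (auto simp: algebra_simps power2_eq_square)
  from irreducibleD[OF irr this] show False
    by (auto dest!: unit_deg)
qed

lemma indep:
  fixes \<theta> :: real
  assumes irr: "irreducible ([:- of_int q, - of_int p, 0, 1:] :: rat poly)"
    and root: "\<theta>^3 - of_int p * \<theta> - of_int q = 0"
    and z: "of_rat r0 + of_rat r1 * \<theta> + of_rat r2 * \<theta>^2 = 0"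
  shows "r0 = 0 \<and> r1 = 0 \<and> r2 = 0"
proof -
  have notrat: "\<theta> \<noteq> of_rat t" for t
  proof
    assume "\<theta> = of_rat t"
    with root have "of_rat (t^3 - of_int p * t - of_int q) = (0::real)"
      by (simp add: of_rat_diff of_rat_mult of_rat_power)
    hence "t^3 - of_int p * t - of_int q = 0" by simp
    with no_rat_root[OF irr] show False by blast
  qed
  show ?thesis
  proof (cases "r2 = 0")
    case True
    show ?thesis
    proof (cases "r1 = 0")
      case True
      with \<open>r2 = 0\<close> z show ?thesis by simp
    next
      case False
      with \<open>r2 = 0\<close> z have "\<theta> = of_rat (- r0 / r1)"
        by (simp add: of_rat_divide of_rat_minus of_rat_diff field_simps)
      with notrat show ?thesis by blast
    qed
  next
    case False
    define a where "a = r0 / r2"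
    define b where "b = r1 / r2"
    have t2: "\<theta>^2 = - of_rat b * \<theta> - of_rat a"
      using z False unfolding a_def b_def
      by (simp add: of_rat_divide field_simps)
    have "\<theta>^3 = \<theta> * \<theta>^2" by (simp add: power2_eq_square power3_eq_cube)
    also have "\<dots> = \<theta> * (- of_rat b * \<theta> - of_rat a)" by (simp only: t2)
    also have "\<dots> = - of_rat b * \<theta>^2 - of_rat a * \<theta>"
      by (simp add: algebra_simps power2_eq_square)
    also have "\<dots> = - of_rat b * (- of_rat b * \<theta> - of_rat a) - of_rat a * \<theta>" by (simp only: t2)
    also have "\<dots> = (of_rat b ^2 - of_rat a) * \<theta> + of_rat b * of_rat a"
      by (simp add: algebra_simps power2_eq_square)
    finally have "(of_rat (b^2 - a - of_int p)) * \<theta> + of_rat (b * a - of_int q) = 0"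
      using root by (simp add: of_rat_diff of_rat_add of_rat_mult of_rat_power algebra_simps)
    hence c: "(of_rat (b^2 - a - of_int p)) * \<theta> = - of_rat (b * a - of_int q)" by (simp add: eq_neg_iff_add_eq_0)
    show ?thesis
    proof (cases "b^2 - a - of_int p = 0")
      case True
      with c have "b * a - of_int q = 0" by simp
      with True no_quad_factor[OF irr, of b a] show ?thesis by simp
    next
      case False
      with c have "\<theta> = of_rat (- (b * a - of_int q) / (b^2 - a - of_int p))"
        by (simp add: of_rat_divide of_rat_minus of_rat_diff field_simps)
      with notrat show ?thesis by blast
    qed
  qed
qed



definition kev :: "'a::field_char_0 \<Rightarrow> rat \<times> rat \<times> rat \<Rightarrow> 'a" where
  "kev t x = of_rat (fst x) + of_rat (fst (snd x)) * t + of_rat (snd (snd x)) * t^2"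

definition kmul :: "rat \<Rightarrow> rat \<Rightarrow> rat \<times> rat \<times> rat \<Rightarrow> rat \<times> rat \<times> rat \<Rightarrow> rat \<times> rat \<times> rat" where
  "kmul p q x y = (case x of (x0,x1,x2) \<Rightarrow> case y of (y0,y1,y2) \<Rightarrow>
     (x0 * y0 + q * (x1 * y2+x2 * y1), x0 * y1+x1 * y0 + p * (x1 * y2+x2 * y1) + q * x2 * y2, x0 * y2+x1 * y1+x2 * y0 + p * x2 * y2))"

primrec kpw :: "rat \<Rightarrow> rat \<Rightarrow> rat \<times> rat \<times> rat \<Rightarrow> nat \<Rightarrow> rat \<times> rat \<times> rat" where
  "kpw p q x 0 = (1,0,0)"
| "kpw p q x (Suc n) = kmul p q x (kpw p q x n)"

definition kscale :: "rat \<Rightarrow> rat \<times> rat \<times> rat \<Rightarrow> rat \<times> rat \<times> rat" where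
  "kscale c x = (c * fst x, c * fst (snd x), c * snd (snd x))"

definition kaddt :: "rat \<times> rat \<times> rat \<Rightarrow> rat \<times> rat \<times> rat \<Rightarrow> rat \<times> rat \<times> rat" where
  "kaddt x y = (fst x + fst y, fst (snd x) + fst (snd y), snd (snd x) + snd (snd y))"

definition kisint :: "rat \<times> rat \<times> rat \<Rightarrow> bool" where
  "kisint x \<longleftrightarrow> fst x \<in> \<int> \<and> fst (snd x) \<in> \<int> \<and> snd (snd x) \<in> \<int>"

definition kNf :: "rat \<Rightarrow> rat \<Rightarrow> rat \<times> rat \<times> rat \<Rightarrow> rat" where
  "kNf p q x = (case x of (u,v,w) \<Rightarrow>
     u^3 + 2 * u^2 * w * p + u * w^2 * p^2 - u * v^2 * p - 3 * u * v * w * q + v^3 * q + w^3 * q^2 - p * q * v * w^2)"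

lemma kev_mul:
  fixes t :: "'a::field_char_0"
  assumes h: "t^3 = of_rat p * t + of_rat q"
  shows "kev t (kmul p q x y) = kev t x * kev t y"
proof -
  obtain x0 x1 x2 y0 y1 y2 where xy: "x = (x0,x1,x2)" "y = (y0,y1,y2)" by (cases x, cases y) auto
  have t4: "t^4 = of_rat p * t^2 + of_rat q * t"
  proof -
    have "t^4 = t * t^3" by (simp add: power_numeral_reduce)
    also have "\<dots> = of_rat p * t^2 + of_rat q * t" by (simp add: h algebra_simps power2_eq_square)
    finally show ?thesis .
  qed
  have "kev t x * kev t y = of_rat x0 * of_rat y0 + (of_rat x0 * of_rat y1 + of_rat x1 * of_rat y0) * t
     + (of_rat x0 * of_rat y2 + of_rat x1 * of_rat y1 + of_rat x2 * of_rat y0) * t^2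
     + (of_rat x1 * of_rat y2 + of_rat x2 * of_rat y1) * t^3 + of_rat x2 * of_rat y2 * t^4"
    unfolding xy kev_def by (simp add: algebra_simps power2_eq_square power3_eq_cube power4_eq_xxxx)
  also have "\<dots> = kev t (kmul p q x y)"
    unfolding xy kev_def kmul_def h t4 by (simp add: of_rat_add of_rat_mult algebra_simps)
  finally show ?thesis ..
qed

lemma kev_pw:
  fixes t :: "'a::field_char_0"
  assumes h: "t^3 = of_rat p * t + of_rat q"
  shows "kev t (kpw p q x n) = kev t x ^ n"
proof (induction n)
  case 0 show ?case by (simp add: kev_def)
next
  case (Suc n) thus ?case by (simp add: kev_mul[OF h])
qed

lemma kev_scale: "kev t (kscale c x) = of_rat c * kev t x"
  by (simp add: kev_def kscale_def of_rat_mult algebra_simps)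

lemma kev_addt: "kev t (kaddt x y) = kev t x + kev t y"
  by (simp add: kev_def kaddt_def of_rat_add algebra_simps)

lemma kisint_mul: "p \<in> \<int> \<Longrightarrow> q \<in> \<int> \<Longrightarrow> kisint x \<Longrightarrow> kisint y \<Longrightarrow> kisint (kmul p q x y)"
  by (cases x; cases y) (auto simp: kisint_def kmul_def)

lemma kisint_pw: "p \<in> \<int> \<Longrightarrow> q \<in> \<int> \<Longrightarrow> kisint x \<Longrightarrow> kisint (kpw p q x n)"
  by (induction n) (auto simp: kisint_mul, simp add: kisint_def)

lemma kisint_scale: "c \<in> \<int> \<Longrightarrow> kisint x \<Longrightarrow> kisint (kscale c x)"
  by (auto simp: kisint_def kscale_def)

lemma kisint_addt: "kisint x \<Longrightarrow> kisint y \<Longrightarrow> kisint (kaddt x y)"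
  by (auto simp: kisint_def kaddt_def)

lemma kisint_Nf: "p \<in> \<int> \<Longrightarrow> q \<in> \<int> \<Longrightarrow> kisint x \<Longrightarrow> kNf p q x \<in> \<int>"
  by (cases x) (auto simp: kisint_def kNf_def)

lemma of_rat_complex: "(of_rat r :: complex) = complex_of_real (of_rat r)"
  by (cases r) (simp add: of_rat_rat)

definition ksig :: "real \<Rightarrow> int \<Rightarrow> complex" where
  "ksig t p = Complex (-t/2) (sqrt (3 * t^2 - 4 * of_int p)/2)"

lemma normid:
  fixes t u v w p q :: real
  assumes h: "t^3 = p * t + q"
  shows "(u + v * t + w * t^2) * ((u - v * t/2 + w * (p - t^2/2))^2 + (3 * t^2-4 * p)/4 * (v - w * t)^2)
    = u^3 + 2 * u^2 * w * p + u * w^2 * p^2 - u * v^2 * p - 3 * u * v * w * q + v^3 * q + w^3 * q^2 - p * q * v * w^2"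
  using h by algebra


lemma bounded_denom:
  fixes r :: rat
  assumes E: "E > (0::nat)" and h: "\<forall>k. of_nat E * r^k \<in> \<int>"
  shows "r \<in> \<int>"
proof -
  obtain a b where q: "quotient_of r = (a,b)" by (cases "quotient_of r")
  have b0: "b > 0" using quotient_of_denom_pos[OF q] .
  have rab: "r = of_int a / of_int b" using quotient_of_div[OF q] .
  have cop: "coprime a b" using quotient_of_coprime[OF q] .
  have bk: "b^k \<le> int E" for k
  proof -
    from h obtain z where z: "of_nat E * r^k = of_int z" by (meson Ints_cases)
    hence "of_nat E * of_int a ^ k = (of_int z * of_int b ^ k :: rat)"
      using b0 unfolding rab by (simp add: power_divide field_simps)
    hence "int E * a^k = z * b^k"
      by (metis (mono_tags, lifting) of_int_eq_iff of_int_mult of_int_of_nat_eq of_int_power)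
    hence "b^k dvd int E * a^k" by simp
    moreover have "coprime (b^k) (a^k)" using cop by (simp add: coprime_commute)
    ultimately have "b^k dvd int E" by (metis coprime_dvd_mult_left_iff mult.commute)
    thus ?thesis using E by (simp add: zdvd_imp_le)
  qed
  have "b = 1"
  proof (rule ccontr)
    assume "b \<noteq> 1"
    with b0 have "b \<ge> 2" by simp
    hence "(2::int)^E \<le> b^E" by (simp add: power_mono)
    moreover have "int E < 2^E" using less_exp[of E] by (metis of_nat_less_iff of_nat_numeral of_nat_power)
    ultimately show False using bk[of E] by simp
  qed
  thus ?thesis using rab by simp
qed

context
  fixes p q :: int and \<theta> :: real
  assumes irr: "irreducible ([:- of_int q, - of_int p, 0, 1:] :: rat poly)"
    and root: "\<theta>^3 - of_int p * \<theta> - of_int q = 0"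
    and ur: "\<forall>x::real. x^3 - of_int p * x - of_int q = 0 \<longrightarrow> x = \<theta>"
begin

lemma root': "\<theta>^3 = of_rat (of_int p) * \<theta> + of_rat (of_int q)"
  using root by simp

lemma uniq: "kev \<theta> x = kev \<theta> y \<Longrightarrow> x = y"
proof -
  assume e: "kev \<theta> x = kev \<theta> y"
  obtain x0 x1 x2 y0 y1 y2 where xy: "x = (x0,x1,x2)" "y = (y0,y1,y2)" by (cases x, cases y) auto
  have "of_rat (x0 - y0) + of_rat (x1 - y1) * \<theta> + of_rat (x2 - y2) * \<theta>^2 = 0"
    using e unfolding xy kev_def by (simp add: of_rat_diff algebra_simps)
  from indep[OF irr root this] show ?thesis using xy by simp
qed

lemma E_pos: "3 * \<theta>^2 - 4 * of_int p > 0"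
proof (rule ccontr)
  assume neg: "\<not> 3 * \<theta>^2 - 4 * of_int p > 0"
  define r where "r = sqrt (-(3 * \<theta>^2 - 4 * of_int p))"
  have r2: "r^2 = -(3 * \<theta>^2 - 4 * of_int p)" using neg unfolding r_def by simp
  have isroot: "x = \<theta>" if "x^2 + \<theta> * x + \<theta>^2 - of_int p = 0" for x
  proof -
    have "x^3 - of_int p * x - of_int q = (x - \<theta>) * (x^2 + \<theta> * x + \<theta>^2 - of_int p) + (\<theta>^3 - of_int p * \<theta> - of_int q)"
      by (simp add: algebra_simps power2_eq_square power3_eq_cube)
    hence "x^3 - of_int p * x - of_int q = 0" using root that by simp
    thus ?thesis using ur by blast
  qed
  have x1: "(-\<theta> + r)/2 = \<theta>"
  proof (rule isroot)
    have "((-\<theta> + r)/2)^2 + \<theta> * ((-\<theta> + r)/2) + \<theta>^2 - of_int p = (r^2 + (3 * \<theta>^2 - 4 * of_int p))/4"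
      by (simp add: field_simps power2_eq_square)
    thus "((-\<theta> + r)/2)^2 + \<theta> * ((-\<theta> + r)/2) + \<theta>^2 - of_int p = 0" using r2 by simp
  qed
  have x2: "(-\<theta> - r)/2 = \<theta>"
  proof (rule isroot)
    have "((-\<theta> - r)/2)^2 + \<theta> * ((-\<theta> - r)/2) + \<theta>^2 - of_int p = (r^2 + (3 * \<theta>^2 - 4 * of_int p))/4"
      by (simp add: field_simps power2_eq_square)
    thus "((-\<theta> - r)/2)^2 + \<theta> * ((-\<theta> - r)/2) + \<theta>^2 - of_int p = 0" using r2 by simp
  qed
  from x1 x2 have "\<theta> = 0" by simp
  with root have "(0::rat)^3 - of_int p * 0 - of_int q = 0" by simp
  with no_rat_root[OF irr] show False by blast
qed


definition "ks = sqrt (3 * \<theta>^2 - 4 * of_int p)/2"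

lemma s2: "ks^2 = (3 * \<theta>^2 - 4 * of_int p)/4"
  using E_pos unfolding ks_def by (simp add: power_divide)

lemma s_pos: "ks > 0"
  using E_pos unfolding ks_def by simp

lemma ksig_eq: "ksig \<theta> p = Complex (-\<theta>/2) ks"
  unfolding ksig_def ks_def ..

lemma ksig_quad: "(ksig \<theta> p)^2 + of_real \<theta> * ksig \<theta> p + of_real (\<theta>^2 - of_int p) = 0"
  using s2 unfolding ksig_eq by (simp add: complex_eq_iff power2_eq_square field_simps)

lemma ksig_root: "(ksig \<theta> p)^3 = of_rat (of_int p) * ksig \<theta> p + of_rat (of_int q)"
proof -
  let ?z = "ksig \<theta> p"
  have "?z^3 - of_int p * ?z - of_int q = (?z - of_real \<theta>) * (?z^2 + of_real \<theta> * ?z + of_real (\<theta>^2 - of_int p))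
      + of_real (\<theta>^3 - of_int p * \<theta> - of_int q)"
    by (simp add: algebra_simps power2_eq_square power3_eq_cube)
  also have "\<dots> = 0" using ksig_quad root by simp
  finally show ?thesis by (simp add: algebra_simps)
qed

lemma kev_sig: "kev (ksig \<theta> p) x = Complex (of_rat (fst x) - of_rat (fst (snd x)) * \<theta>/2 + of_rat (snd (snd x)) * (of_int p - \<theta>^2/2))
     (ks * (of_rat (fst (snd x)) - of_rat (snd (snd x)) * \<theta>))"
proof -
  have sq: "(ksig \<theta> p)^2 = Complex (of_int p - \<theta>^2/2) (- \<theta> * ks)"
    using s2 unfolding ksig_eq by (simp add: complex_eq_iff power2_eq_square field_simps)
  show ?thesis unfolding kev_def sq unfolding ksig_eq
    by (simp add: complex_eq_iff field_simps of_rat_complex)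
qed

lemma Nr_eq: "kev \<theta> x * (cmod (kev (ksig \<theta> p) x))^2 = of_rat (kNf (of_int p) (of_int q) x)"
proof -
  obtain u v w where x: "x = (u,v,w)" by (cases x) auto
  have h: "\<theta>^3 = of_int p * \<theta> + of_int q" using root by simp
  have "(cmod (kev (ksig \<theta> p) x))^2 = (of_rat u - of_rat v * \<theta>/2 + of_rat w * (of_int p - \<theta>^2/2))^2 + ks^2 * (of_rat v - of_rat w * \<theta>)^2"
    unfolding kev_sig x by (simp add: complex_norm power_mult_distrib)
  also have "\<dots> = (of_rat u - of_rat v * \<theta>/2 + of_rat w * (of_int p - \<theta>^2/2))^2 + (3 * \<theta>^2-4 * of_int p)/4 * (of_rat v - of_rat w * \<theta>)^2"
    unfolding s2 ..
  finally have c: "(cmod (kev (ksig \<theta> p) x))^2 = \<dots>" .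
  show ?thesis unfolding c unfolding x kev_def kNf_def
    using normid[OF h, of "of_rat u" "of_rat v" "of_rat w"] by (simp add: of_rat_add of_rat_diff of_rat_mult of_rat_power)
qed


definition "kZT = {t. \<exists>z. kisint z \<and> t = kev \<theta> z}"

lemma kZT_I: "kisint z \<Longrightarrow> t = kev \<theta> z \<Longrightarrow> t \<in> kZT"
  unfolding kZT_def by blast

lemma kZT_E: "t \<in> kZT \<Longrightarrow> (\<And>z. kisint z \<Longrightarrow> t = kev \<theta> z \<Longrightarrow> P) \<Longrightarrow> P"
  unfolding kZT_def by blast

lemma kZT_add: "a \<in> kZT \<Longrightarrow> b \<in> kZT \<Longrightarrow> a + b \<in> kZT"
  by (erule kZT_E, erule kZT_E, rule kZT_I[OF kisint_addt], assumption+, simp add: kev_addt)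

lemma kZT_intmul: "c \<in> (\<int>::real set) \<Longrightarrow> a \<in> kZT \<Longrightarrow> c * a \<in> kZT"
proof -
  assume c: "c \<in> \<int>" and a: "a \<in> kZT"
  from c obtain e where e: "c = of_int e" by (auto elim: Ints_cases)
  from a obtain z where z: "kisint z" "a = kev \<theta> z" by (rule kZT_E)
  have "c * a = kev \<theta> (kscale (of_int e) z)" using e z by (simp add: kev_scale)
  moreover have "kisint (kscale (of_int e) z)" using z by (intro kisint_scale) auto
  ultimately show ?thesis by (intro kZT_I) auto
qed

lemma kZT_sum: "finite A \<Longrightarrow> (\<And>i. i \<in> A \<Longrightarrow> f i \<in> kZT) \<Longrightarrow> sum f A \<in> kZT"
proof (induction A rule: finite_induct)
  case empty
  have "kisint (0,0,0)" by (simp add: kisint_def)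
  moreover have "(0::real) = kev \<theta> (0,0,0)" by (simp add: kev_def)
  ultimately show ?case by (intro kZT_I) auto
next
  case (insert x F) thus ?case by (simp add: kZT_add)
qed

lemma intnorm:
  assumes d0: "d > (0::nat)" and OK_sub: "ring_of_integers \<theta> \<subseteq> scaled_order d \<theta>"
    and yO: "y \<in> ring_of_integers \<theta>" and xy: "kev \<theta> x = y"
  shows "kNf (of_int p) (of_int q) x \<in> \<int>"
proof -
  have pq: "(of_int p :: rat) \<in> \<int>" "(of_int q :: rat) \<in> \<int>" by auto
  from OK_sub yO have "y \<in> scaled_order d \<theta>" by auto
  then obtain u v w :: int where uvw: "y = (of_int u + of_int v * \<theta> + of_int w * \<theta>^2) / real d"
    unfolding scaled_order_def by auto
  have "kev \<theta> (kscale (of_nat d) x) = kev \<theta> (of_int u, of_int v, of_int w)"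
    using d0 unfolding kev_scale xy uvw by (simp add: kev_def)
  hence sdx: "kscale (of_nat d) x = (of_int u, of_int v, of_int w)" by (rule uniq)
  have isd: "kisint (kscale (of_nat d) x)" unfolding sdx by (simp add: kisint_def)
  from yO have "algebraic_int y" unfolding ring_of_integers_def by auto
  then obtain P where P: "lead_coeff P = 1" "\<forall>i. coeff P i \<in> \<int>" "poly P y = 0"
    by (auto elim: algebraic_int.cases)
  define m where "m = degree P"
  have m0: "m > 0"
  proof (rule ccontr)
    assume "\<not> m > 0"
    hence "m = 0" by simp
    hence "poly P y = coeff P 0" unfolding m_def by (simp add: poly_altdef)
    also have "\<dots> = 1" using P(1) \<open>m = 0\<close> unfolding m_def by simp
    finally show False using P(3) by simp
  qed
  have ym: "y^m = - (\<Sum>i<m. coeff P i * y^i)"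
  proof -
    have "0 = (\<Sum>i\<le>m. coeff P i * y^i)" using P(3) unfolding m_def by (simp add: poly_altdef)
    also have "\<dots> = (\<Sum>i<m. coeff P i * y^i) + coeff P m * y^m"
      by (simp add: lessThan_Suc_atMost[symmetric])
    also have "coeff P m = 1" using P(1) unfolding m_def by simp
    finally show ?thesis by (simp add: eq_neg_iff_add_eq_0 add.commute)
  qed
  have key: "of_nat d ^ m * y^k \<in> kZT" for k
  proof (induction k rule: less_induct)
    case (less k)
    show ?case
    proof (cases "k < m")
      case True
      have "of_nat d ^ m * y^k = kev \<theta> (kscale (of_nat (d^(m-k))) (kpw (of_int p) (of_int q) (kscale (of_nat d) x) k))"
      proof -
        have "of_nat d ^ m * y^k = of_nat d ^ (m-k) * (of_nat d * y)^k"
          using True by (simp add: power_mult_distrib power_add[symmetric])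
        thus ?thesis by (simp add: kev_scale kev_pw[OF root'] xy of_rat_power)
      qed
      moreover have "kisint (kscale (of_nat (d^(m-k))) (kpw (of_int p) (of_int q) (kscale (of_nat d) x) k))"
        by (intro kisint_scale kisint_pw pq isd) auto
      ultimately show ?thesis by (intro kZT_I) auto
    next
      case False
      have "of_nat d ^ m * y^k = y^(k-m) * (of_nat d ^ m * y^m)"
        using False by (simp add: power_add[symmetric] algebra_simps)
      also have "\<dots> = (\<Sum>i<m. (- coeff P i) * (of_nat d ^ m * y^(k-m+i)))"
        unfolding ym by (simp add: sum_distrib_left sum_negf algebra_simps power_add)
      also have "\<dots> \<in> kZT"
      proof (rule kZT_sum)
        fix i assume "i \<in> {..<m}"
        hence lt: "k - m + i < k" using False by auto
        have c: "- coeff P i \<in> \<int>" using P(2) by auto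
        from kZT_intmul[OF c less[OF lt]] show "(- coeff P i) * (of_nat d ^ m * y^(k-m+i)) \<in> kZT" .
      qed simp
      finally show ?thesis .
    qed
  qed
  have "of_nat (d^(3 * m)) * (kNf (of_int p) (of_int q) x)^k \<in> \<int>" for k
  proof -
    from key[of k] obtain z where z: "kisint z" "of_nat d ^ m * y^k = kev \<theta> z" by (rule kZT_E)
    have "kev \<theta> z = kev \<theta> (kscale (of_nat (d^m)) (kpw (of_int p) (of_int q) x k))"
      using z(2) by (simp add: kev_scale kev_pw[OF root'] xy of_rat_power)
    hence zeq: "z = kscale (of_nat (d^m)) (kpw (of_int p) (of_int q) x k)" by (rule uniq)
    have "of_rat (kNf (of_int p) (of_int q) z) = kev \<theta> z * (cmod (kev (ksig \<theta> p) z))^2"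
      by (simp add: Nr_eq)
    also have "\<dots> = of_nat (d^(3 * m)) * (kev \<theta> x * (cmod (kev (ksig \<theta> p) x))^2)^k"
    proof -
      define c where "c = cmod (kev (ksig \<theta> p) x)"
      have e1: "kev \<theta> z = real d ^ m * (kev \<theta> x)^k"
        unfolding zeq kev_scale kev_pw[OF root'] by (simp add: of_rat_power)
      have e2: "cmod (kev (ksig \<theta> p) z) = real d ^ m * c^k"
        unfolding zeq kev_scale kev_pw[OF ksig_root] c_def
        by (simp add: norm_mult norm_power of_rat_complex of_rat_power)
      have "(c^k)^2 = (c^2)^k" by (simp add: power_mult[symmetric] mult.commute)
      thus ?thesis unfolding e1 e2 c_def[symmetric]
        by (simp add: power_mult_distrib power_mult[symmetric] power_add[symmetric] algebra_simps numeral_3_eq_3)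
    qed
    also have "\<dots> = of_rat (of_nat (d^(3 * m)) * (kNf (of_int p) (of_int q) x)^k)"
      by (simp add: Nr_eq of_rat_mult of_rat_power)
    finally have "kNf (of_int p) (of_int q) z = of_nat (d^(3 * m)) * (kNf (of_int p) (of_int q) x)^k"
      by simp
    with kisint_Nf[OF pq z(1)] show ?thesis by simp
  qed
  thus ?thesis by (intro bounded_denom[of "d^(3 * m)"]) (use d0 in auto)
qed

end


lemma final_ineq:
  fixes th Lam A B Cc R T s :: real and p :: int and d :: nat
  assumes Epos: "3 * th^2 - 4 * of_int p > 0"
    and s2: "s^2 = (3 * th^2 - 4 * of_int p)/4"
    and LamE: "Lam = A + B * th + Cc * th^2"
    and RE: "R = A - B * th/2 + Cc * (of_int p - th^2/2)"
    and TE: "T = B - Cc * th"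
    and M: "R^2 + (s * T)^2 = 1/Lam"
    and Lpos: "Lam > 0"
    and d0: "d > 0"
    and big: "sqrt Lam ^ 3 > 2 * (1 + sqrt 2) * C1 p th"
  shows "real d * Cc > 0 \<and> C2 p d th / 2 * sqrt Lam < sqrt (real d * Cc) \<and>
         sqrt (real d * Cc) < 3 * C2 p d th / 2 * sqrt Lam"
proof -
  define E where "E = 3 * th^2 - 4 * of_int p"
  define D where "D = 3 * th^2 - of_int p"
  have E0: "E > 0" using Epos E_def by simp
  have D0: "D > 0" using Epos zero_le_power2[of th] unfolding D_def by (cases "(of_int p::real) \<ge> 0") linarith+
  have id: "4 * D * (R^2 + (s * T)^2) - E * (Cc * D - Lam)^2 = (3 * th * R - E * T/2)^2"
    unfolding D_def E_def LamE RE TE power_mult_distrib s2 by algebra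
  have k1: "E * (Cc * D - Lam)^2 \<le> 4 * D/Lam"
  proof -
    have "E * (Cc * D - Lam)^2 \<le> 4 * D * (R^2 + (s * T)^2)" using id by (smt (verit) zero_le_power2)
    thus ?thesis unfolding M by simp
  qed
  define C where "C = C1 p th"
  have C_ge1: "C \<ge> sqrt 2" unfolding C_def C1_def by simp
  have C_ge2: "C \<ge> sqrt 2 * \<bar>th\<bar> / sqrt E" unfolding C_def C1_def E_def by simp
  have C2a: "C^2 \<ge> 2"
    using power_mono[OF C_ge1, of 2] by simp
  have C2b: "E * C^2 \<ge> 2 * th^2"
  proof -
    have "(sqrt 2 * \<bar>th\<bar> / sqrt E)^2 \<le> C^2"
      using power_mono[OF C_ge2, of 2] E0 by simp
    hence "2 * th^2 / E \<le> C^2" using E0 by (simp add: power_divide power_mult_distrib)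
    thus ?thesis using E0 by (simp add: field_simps)
  qed
  have EC: "64 * D \<le> 96 * (E * C^2)"
  proof (cases "p \<ge> 0")
    case True
    hence "D \<le> 3 * th^2" unfolding D_def by simp
    thus ?thesis using C2b by linarith
  next
    case False
    hence "D \<le> E" unfolding D_def E_def by simp
    moreover have "E * 2 \<le> E * C^2" using C2a E0 by simp
    ultimately show ?thesis using E0 by linarith
  qed
  have sq2: "sqrt 2 \<ge> 1.4"
    by (rule real_le_rsqrt) (simp add: power2_eq_square)
  define t where "t = sqrt Lam"
  have t0: "t > 0" using Lpos t_def by simp
  have tL: "t^2 = Lam" using Lpos t_def by simp
  have K0: "0 \<le> 2 * (1 + sqrt 2) * C"
  proof -
    have "0 \<le> C" using C_ge1 real_sqrt_ge_zero[of 2] by linarith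
    thus ?thesis by simp
  qed
  have "(2 * (1 + sqrt 2) * C)^2 < (t^3)^2"
    using big K0 unfolding t_def[symmetric] C_def[symmetric]
    by (intro power_strict_mono) auto
  moreover have "(2 * (1 + sqrt 2) * C)^2 = 4 * (1 + sqrt 2)^2 * C^2"
    by (simp only: power_mult_distrib) simp
  moreover have "(t^3)^2 = Lam^3"
    unfolding tL[symmetric] by (simp only: power_mult[symmetric]) simp
  ultimately have Kt: "4 * (1 + sqrt 2)^2 * C^2 < Lam^3" by simp
  have "(2.4::real)^2 \<le> (1 + sqrt 2)^2" using sq2
    by (intro power_mono) auto
  hence "(1 + sqrt 2)^2 \<ge> 5.76" by (simp add: power2_eq_square)
  hence "23 * C^2 \<le> 4 * (1 + sqrt 2)^2 * C^2"
    using C2a by (intro mult_right_mono) auto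
  hence "23 * C^2 < Lam^3" using Kt by linarith
  hence "23 * (E * C^2) < E * Lam^3" using E0 by simp
  moreover have "E * C^2 \<ge> 0" using E0 by simp
  ultimately have big2: "64 * D < 9 * (E * Lam^3)" using EC by linarith
  have k2: "(Cc * D - Lam)^2 < (3 * Lam/4)^2"
  proof -
    have "E * (Cc * D - Lam)^2 * Lam \<le> 4 * D"
      using k1 Lpos by (simp add: pos_le_divide_eq)
    moreover have "E * (Cc * D - Lam)^2 * Lam = (Cc * D - Lam)^2 * (E * Lam)" by (simp add: algebra_simps)
    ultimately have "(Cc * D - Lam)^2 * (E * Lam) \<le> 4 * D" by simp
    also have "4 * D < (3 * Lam/4)^2 * (E * Lam)"
    proof -
      have "(3 * Lam/4)^2 * (E * Lam) = 9 * (E * Lam^3) / 16"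
        by (simp add: power2_eq_square power3_eq_cube)
      thus ?thesis using big2 by linarith
    qed
    finally have "(Cc * D - Lam)^2 * (E * Lam) < (3 * Lam/4)^2 * (E * Lam)" .
    thus ?thesis using E0 Lpos by (simp add: mult_less_cancel_right)
  qed
  have "\<bar>Cc * D - Lam\<bar>^2 < (3 * Lam/4)^2" using k2 by (simp only: power2_abs)
  hence k3: "\<bar>Cc * D - Lam\<bar> < 3 * Lam/4"
    by (rule power2_less_imp_less) (use Lpos in simp)
  hence lohi: "Cc * D - Lam < 3 * Lam/4 \<and> - (Cc * D - Lam) < 3 * Lam/4" by (simp only: abs_less_iff)
  have lo: "Lam/4 < Cc * D" and hi: "Cc * D < 7 * Lam/4" using lohi by linarith+
  have "Cc * D > 0" using lo Lpos by linarith
  hence Cc0: "Cc > 0" using D0 by (simp add: zero_less_mult_iff)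
  have dd: "real d > 0" using d0 by simp
  have C2e: "C2 p d th = sqrt (real d) / sqrt D" unfolding C2_def D_def ..
  have s4: "sqrt 4 = (2::real)" by (simp add: real_sqrt_unique)
  have s9: "sqrt 9 = (3::real)" by (simp add: real_sqrt_unique)
  have low: "C2 p d th / 2 * sqrt Lam = sqrt (real d * Lam / (4 * D))"
  proof -
    have "sqrt (real d * Lam / (4 * D)) = sqrt (real d) * sqrt Lam / (sqrt 4 * sqrt D)"
      by (simp only: real_sqrt_mult real_sqrt_divide)
    thus ?thesis unfolding C2e s4 by simp
  qed
  have up: "3 * C2 p d th / 2 * sqrt Lam = sqrt (9 * real d * Lam / (4 * D))"
  proof -
    have "sqrt (9 * real d * Lam / (4 * D)) = sqrt 9 * sqrt (real d) * sqrt Lam / (sqrt 4 * sqrt D)"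
      by (simp only: real_sqrt_mult real_sqrt_divide)
    thus ?thesis unfolding C2e s4 s9 by simp
  qed
  have i1: "real d * Lam / (4 * D) < real d * Cc"
  proof -
    have "Lam < 4 * (Cc * D)" using lo by linarith
    hence "real d * Lam < real d * (4 * (Cc * D))" using dd by simp
    hence "real d * Lam < real d * Cc * (4 * D)" by (simp add: algebra_simps)
    thus ?thesis using D0 by (simp add: pos_divide_less_eq)
  qed
  have i2: "real d * Cc < 9 * real d * Lam / (4 * D)"
  proof -
    have "4 * (Cc * D) < 9 * Lam" using hi Lpos by linarith
    hence "real d * (4 * (Cc * D)) < real d * (9 * Lam)" using dd by simp
    hence "real d * Cc * (4 * D) < 9 * real d * Lam" by (simp add: algebra_simps)
    thus ?thesis using D0 by (simp add: pos_less_divide_eq)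
  qed
  have "sqrt (real d * Lam / (4 * D)) < sqrt (real d * Cc)" using i1 by (simp only: real_sqrt_less_iff)
  moreover have "sqrt (real d * Cc) < sqrt (9 * real d * Lam / (4 * D))" using i2 by (simp only: real_sqrt_less_iff)
  moreover have "real d * Cc > 0" using dd Cc0 by simp
  ultimately show ?thesis unfolding low up by simp
qed



theorem mainTheorem11:
  fixes p q :: int and \<theta> lam :: real and d n :: nat and a b c :: "nat \<Rightarrow> rat"
  assumes irr: "irreducible ([:- of_int q, - of_int p, 0, 1:] :: rat poly)"
    and root: "\<theta>^3 - of_int p * \<theta> - of_int q = 0"
    and unique_real_root: "\<forall>x::real. x^3 - of_int p * x - of_int q = 0 \<longrightarrow> x = \<theta>"
    and d_pos: "d > 0"
    and OK_sub: "ring_of_integers \<theta> \<subseteq> scaled_order d \<theta>"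
    and lam_OK: "lam \<in> ring_of_integers \<theta>"
    and lam_unit: "inverse lam \<in> ring_of_integers \<theta>"
    and lam_gt: "lam > 1"
    and abc: "\<forall>m\<ge>1. of_rat (a m) + of_rat (b m) * \<theta> + of_rat (c m) * \<theta>^2 = lam ^ m"
    and n_pos: "n \<ge> 1"
    and n_large: "lam powr (3 * real n / 2) > 2 * (1 + sqrt 2) * C1 p \<theta>"
  shows "real d * of_rat (c n) > 0 \<and>
         C2 p d \<theta> / 2 * lam powr (real n / 2) < sqrt (real d * of_rat (c n)) \<and>
         sqrt (real d * of_rat (c n)) < 3 * C2 p d \<theta> / 2 * lam powr (real n / 2)"
proof -
  note ctx = irr root unique_real_root
  let ?P = "of_int p :: rat" and ?Q = "of_int q :: rat"
  let ?sg = "ksig \<theta> p"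
  have rt: "\<theta>^3 = of_rat ?P * \<theta> + of_rat ?Q" using root' [OF ctx] .
  have srt: "?sg^3 = of_rat ?P * ?sg + of_rat ?Q" using ksig_root[OF ctx] .
  have inK: "\<exists>x. kev \<theta> x = y" if "y \<in> ring_of_integers \<theta>" for y
  proof -
    from that obtain r0 r1 r2 where "y = of_rat r0 + of_rat r1 * \<theta> + of_rat r2 * \<theta>^2"
      unfolding ring_of_integers_def cubic_field_def by auto
    hence "kev \<theta> (r0,r1,r2) = y" by (simp add: kev_def)
    thus ?thesis by blast
  qed
  obtain L where L: "kev \<theta> L = lam" using inK[OF lam_OK] by blast
  obtain Li where Li: "kev \<theta> Li = inverse lam" using inK[OF lam_unit] by blast
  have NL: "kNf ?P ?Q L \<in> \<int>" by (rule intnorm[OF ctx d_pos OK_sub lam_OK L])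
  have NLi: "kNf ?P ?Q Li \<in> \<int>" by (rule intnorm[OF ctx d_pos OK_sub lam_unit Li])
  have "kev \<theta> (kmul ?P ?Q L Li) = lam * inverse lam" by (simp only: kev_mul[OF rt] L Li)
  also have "\<dots> = kev \<theta> (1,0,0)" using lam_gt by (simp add: kev_def)
  finally have "kev \<theta> (kmul ?P ?Q L Li) = kev \<theta> (1,0,0)" .
  hence mLLi: "kmul ?P ?Q L Li = (1,0,0)" by (rule uniq[OF ctx])
  define cL where "cL = (cmod (kev ?sg L))^2"
  have NLr: "of_rat (kNf ?P ?Q L) = lam * cL" using Nr_eq[OF ctx, of L] L cL_def by simp
  have "of_rat (kNf ?P ?Q L * kNf ?P ?Q Li) = kev \<theta> (kmul ?P ?Q L Li) * (cmod (kev ?sg (kmul ?P ?Q L Li)))^2"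
    by (simp add: of_rat_mult Nr_eq[OF ctx, symmetric] kev_mul[OF rt] kev_mul[OF srt] norm_mult power_mult_distrib)
  also have "\<dots> = 1" unfolding mLLi by (simp add: kev_def)
  finally have prod1: "kNf ?P ?Q L * kNf ?P ?Q Li = 1" by simp
  from NL obtain i where i: "kNf ?P ?Q L = of_int i" by (auto elim: Ints_cases)
  from NLi obtain j where j: "kNf ?P ?Q Li = of_int j" by (auto elim: Ints_cases)
  from prod1 have "i * j = 1" unfolding i j by (metis of_int_1 of_int_eq_iff of_int_mult)
  hence "i = 1 \<or> i = -1" using zmult_eq_1_iff by (metis zmult_eq_1_iff)
  moreover have "lam * cL \<ge> 0" using lam_gt cL_def by simp
  moreover have "i \<noteq> -1"
  proof
    assume "i = -1"
    hence "lam * cL = -1" using NLr i by (simp add: of_rat_minus)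
    with \<open>lam * cL \<ge> 0\<close> show False by simp
  qed
  ultimately have "i = 1" by blast
  hence cL1: "lam * cL = 1" using NLr i by simp
  define Lam where "Lam = lam ^ n"
  have Lpos: "Lam > 0" using lam_gt Lam_def by simp
  have abcn: "kev \<theta> (a n, b n, c n) = Lam" using abc n_pos Lam_def by (simp add: kev_def)
  hence "kev \<theta> (a n, b n, c n) = kev \<theta> (kpw ?P ?Q L n)" by (simp add: kev_pw[OF rt] L Lam_def)
  hence abcpw: "(a n, b n, c n) = kpw ?P ?Q L n" by (rule uniq[OF ctx])
  have Mn: "(cmod (kev ?sg (a n, b n, c n)))^2 = 1 / Lam"
  proof -
    have "(cmod (kev ?sg (a n, b n, c n)))^2 = cL ^ n"
      unfolding abcpw kev_pw[OF srt] cL_def by (simp add: norm_power power_mult[symmetric] mult.commute)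
    also have "cL = 1 / lam" using cL1 lam_gt by (simp add: field_simps)
    finally show ?thesis unfolding Lam_def by (simp add: power_divide)
  qed
  define R where "R = of_rat (a n) - of_rat (b n) * \<theta>/2 + of_rat (c n) * (of_int p - \<theta>^2/2)"
  define T where "T = of_rat (b n) - of_rat (c n) * \<theta>"
  have "(cmod (kev ?sg (a n, b n, c n)))^2 = R^2 + (ks p \<theta> * T)^2"
    unfolding kev_sig[OF ctx] R_def T_def by (simp add: complex_norm)
  hence M: "R^2 + (ks p \<theta> * T)^2 = 1 / Lam" using Mn by simp
  have sqL: "lam powr (real n / 2) = sqrt Lam"
    unfolding Lam_def using lam_gt
    by (simp add: powr_half_sqrt[symmetric] powr_realpow[symmetric] powr_powr)
  have sqL3: "lam powr (3 * real n / 2) = sqrt Lam ^ 3"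
  proof -
    have "lam powr (3 * real n / 2) = (lam powr (real n / 2)) powr 3"
      using lam_gt by (simp add: powr_powr mult.commute)
    also have "\<dots> = sqrt Lam ^ 3" unfolding sqL using Lpos by (simp add: powr_realpow)
    finally show ?thesis .
  qed
  have "real d * of_rat (c n) > 0 \<and> C2 p d \<theta> / 2 * sqrt Lam < sqrt (real d * of_rat (c n)) \<and>
         sqrt (real d * of_rat (c n)) < 3 * C2 p d \<theta> / 2 * sqrt Lam"
  proof (rule final_ineq)
    show "3 * \<theta>^2 - 4 * of_int p > 0" by (rule E_pos[OF ctx])
    show "(ks p \<theta>)^2 = (3 * \<theta>^2 - 4 * of_int p)/4" by (rule s2[OF ctx])
    show "Lam = of_rat (a n) + of_rat (b n) * \<theta> + of_rat (c n) * \<theta>^2" using abcn by (simp add: kev_def)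
  qed (use R_def T_def M Lpos d_pos n_large sqL3 in auto)
  thus ?thesis unfolding sqL .
qed


end
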